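(* Let $1\gg p,q\gg n^{-1}$. Let $G$ be an $n$-vertex $q$-cut-dense graph and let $S$ be a $p$-random subset of $V(G)$. Then with high probability every induced subgraph of $G$ whose vertex set contains $S$ is $p^{q^{-4}}q^5$-cut-dense.
   Context: A graph $G$ is $q$-cut-dense if for every partition $V(G)=A\cup B$ into disjoint sets, the number of edges between $A$ and $B$ is at least $q|A||B|$. A $p$-random subset contains each vertex independently with probability $p$. "$1\gg p,q\gg n^{-1}$" means $p,q$ are sufficiently small positive constants and $n$ is sufficiently large in terms of $p,q$; "with high probability" means with probability tending to $1$ as $n\to\infty$. *)

theory Defs
  imports Complex_Main
begin

definition simple_graph :: "nat set \<Rightarrow> (nat \<Rightarrow> nat \<Rightarrow> bool) \<Rightarrow> bool" where
  "simple_graph V E \<longleftrightarrow> finite V \<and> (\<forall>u v. E u v \<longrightarrow> E v u) \<and> (\<forall>v. \<not> E v v)"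

definition e_between :: "(nat \<Rightarrow> nat \<Rightarrow> bool) \<Rightarrow> nat set \<Rightarrow> nat set \<Rightarrow> nat" where
  "e_between E A B = card {(a, b). a \<in> A \<and> b \<in> B \<and> E a b}"

text \<open>Applied to a subset V of the
  vertices, this is cut-density of the induced subgraph G[V].\<close>
definition cut_dense :: "real \<Rightarrow> nat set \<Rightarrow> (nat \<Rightarrow> nat \<Rightarrow> bool) \<Rightarrow> bool" where
  "cut_dense q V E \<longleftrightarrow> (\<forall>A B. A \<union> B = V \<and> A \<inter> B = {} \<longrightarrow>
      real (e_between E A B) \<ge> q * real (card A) * real (card B))"

definition random_subset_prob :: "nat \<Rightarrow> real \<Rightarrow> (nat set \<Rightarrow> bool) \<Rightarrow> real" where
  "random_subset_prob n p P =
     (\<Sum>S\<in>{S. S \<subseteq> {0..<n} \<and> P S}. p ^ card S * (1 - p) ^ (n - card S))"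

end

theory Submission
  imports Defs "HOL-Real_Asymp.Real_Asymp"
begin


definition Wt :: "nat \<Rightarrow> real \<Rightarrow> nat set \<Rightarrow> real" where
  "Wt n p S = p ^ card S * (1 - p) ^ (n - card S)"

lemma rsp_alt: "random_subset_prob n p P = (\<Sum>S\<in>Pow {0..<n}. Wt n p S * of_bool (P S))"
proof -
  have "Pow {0..<n} \<inter> Collect P = {S. S \<subseteq> {0..<n} \<and> P S}" by auto
  then show ?thesis unfolding random_subset_prob_def Wt_def
    by (simp add: sum.inter_filter if_distrib cong: if_cong)
qed

lemma Wt_nonneg: "0 \<le> p \<Longrightarrow> p \<le> 1 \<Longrightarrow> 0 \<le> Wt n p S"
  unfolding Wt_def by simp

lemma expect_prod:
  "(\<Sum>S\<in>Pow {0..<n}. Wt n p S * (\<Prod>v\<in>S. a v)) = (\<Prod>v\<in>{0..<n}. p * a v + (1 - p))"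
proof -
  have "(\<Prod>v\<in>{0..<n}. p * a v + (1 - p)) =
     (\<Sum>X\<in>Pow {0..<n}. (\<Prod>x\<in>X. p * a x) * (\<Prod>x\<in>{0..<n}-X. 1 - p))"
    by (rule prod_add) simp
  also have "\<dots> = (\<Sum>S\<in>Pow {0..<n}. Wt n p S * (\<Prod>v\<in>S. a v))"
  proof (rule sum.cong)
    fix X assume "X \<in> Pow {0..<n}"
    then have X: "X \<subseteq> {0..<n}" by auto
    then have fX: "finite X" using finite_subset by blast
    have "card ({0..<n} - X) = n - card X" using X fX by (simp add: card_Diff_subset)
    then show "(\<Prod>x\<in>X. p * a x) * (\<Prod>x\<in>{0..<n}-X. 1 - p) = Wt n p X * (\<Prod>v\<in>X. a v)"
      unfolding Wt_def by (simp add: prod.distrib)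
  qed simp
  finally show ?thesis by simp
qed

lemma rsp_total: "(\<Sum>S\<in>Pow {0..<n}. Wt n p S) = 1"
  using expect_prod[of n p "\<lambda>_. 1"] by simp

lemma rsp_mono:
  assumes "0 \<le> p" "p \<le> 1" "\<And>S. S \<subseteq> {0..<n} \<Longrightarrow> P S \<Longrightarrow> Q S"
  shows "random_subset_prob n p P \<le> random_subset_prob n p Q"
  unfolding rsp_alt
  apply (rule sum_mono)
  using assms by (auto intro!: mult_left_mono Wt_nonneg)

lemma rsp_compl: "random_subset_prob n p P = 1 - random_subset_prob n p (\<lambda>S. \<not> P S)"
proof -
  have "random_subset_prob n p P + random_subset_prob n p (\<lambda>S. \<not> P S) = 1"
  proof -
    have "\<And>x. (of_bool (P x) + of_bool (\<not> P x)::real) = 1" by simp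
    then show ?thesis
      unfolding rsp_alt sum.distrib[symmetric] distrib_left[symmetric] using rsp_total[of n p]
      by simp
  qed
  then show ?thesis by simp
qed

lemma rsp_or:
  assumes "0 \<le> p" "p \<le> 1"
  shows "random_subset_prob n p (\<lambda>S. P S \<or> Q S) \<le> random_subset_prob n p P + random_subset_prob n p Q"
  unfolding rsp_alt sum.distrib[symmetric]
  apply (rule sum_mono)
  using Wt_nonneg[OF assms] by (auto simp: distrib_left[symmetric] intro!: mult_left_mono)

lemma rsp_union:
  assumes "0 \<le> p" "p \<le> 1" "finite I"
  shows "random_subset_prob n p (\<lambda>S. \<exists>i\<in>I. B i S) \<le> (\<Sum>i\<in>I. random_subset_prob n p (B i))"
proof -
  have "random_subset_prob n p (\<lambda>S. \<exists>i\<in>I. B i S) \<le> (\<Sum>S\<in>Pow {0..<n}. \<Sum>i\<in>I. Wt n p S * of_bool (B i S))"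
    unfolding rsp_alt
  proof (rule sum_mono)
    fix S
    have "of_bool (\<exists>i\<in>I. B i S) \<le> (\<Sum>i\<in>I. (of_bool (B i S)::real))"
    proof (cases "\<exists>i\<in>I. B i S")
      case True
      then obtain i where "i \<in> I" "B i S" by auto
      then have "(of_bool (B i S)::real) \<le> (\<Sum>i\<in>I. of_bool (B i S))"
        using assms(3) by (intro member_le_sum) auto
      then show ?thesis using True \<open>B i S\<close> by simp
    qed (simp add: sum_nonneg)
    then show "Wt n p S * of_bool (\<exists>i\<in>I. B i S) \<le> (\<Sum>i\<in>I. Wt n p S * of_bool (B i S))"
      using Wt_nonneg[OF assms(1,2)] by (simp add: sum_distrib_left[symmetric] mult_left_mono)
  qed
  also have "\<dots> = (\<Sum>i\<in>I. random_subset_prob n p (B i))"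
    unfolding rsp_alt by (rule sum.swap)
  finally show ?thesis .
qed

lemma exp_neg_le: "0 \<le> (x::real) \<Longrightarrow> exp (-x) \<le> 1 - x + x^2"
proof -
  assume x: "0 \<le> x"
  have "1 + x \<le> exp x" by simp
  then have "exp (-x) \<le> 1 / (1 + x)" using x by (simp add: exp_minus divide_simps)
  also have "\<dots> \<le> 1 - x + x^2" using x
    by (simp add: divide_simps power2_eq_square algebra_simps)
  finally show ?thesis .
qed

lemma rsp_tail:
  assumes p: "0 \<le> p" "p \<le> 1" and e: "0 \<le> e"
    and w: "\<And>v. v \<in> {0..<n} \<Longrightarrow> 0 \<le> w v \<and> w v \<le> 1"
  shows "random_subset_prob n p (\<lambda>S. (\<Sum>u\<in>S. w u) < p * (\<Sum>u\<in>{0..<n}. w u) - e * n)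
           \<le> exp (- (e^2 * n / 4))"
proof -
  define l where "l = e / 2"
  define \<theta> where "\<theta> = p * (\<Sum>u\<in>{0..<n}. w u) - e * n"
  have l0: "0 \<le> l" using e by (simp add: l_def)
  have "random_subset_prob n p (\<lambda>S. (\<Sum>u\<in>S. w u) < \<theta>)
      \<le> (\<Sum>S\<in>Pow {0..<n}. Wt n p S * (exp (l * \<theta>) * (\<Prod>v\<in>S. exp (- (l * w v)))))"
    unfolding rsp_alt
  proof (rule sum_mono)
    fix S assume S: "S \<in> Pow {0..<n}"
    then have fS: "finite S" using finite_subset by auto
    have "of_bool ((\<Sum>u\<in>S. w u) < \<theta>) \<le> exp (l * (\<theta> - (\<Sum>u\<in>S. w u)))"
    proof (cases "(\<Sum>u\<in>S. w u) < \<theta>")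
      case True
      then have "0 \<le> l * (\<theta> - (\<Sum>u\<in>S. w u))" using l0 by simp
      then have "1 \<le> exp (l * (\<theta> - (\<Sum>u\<in>S. w u)))" by simp
      then show ?thesis using True by simp
    qed simp
    also have "\<dots> = exp (l * \<theta>) * (\<Prod>v\<in>S. exp (- (l * w v)))"
    proof -
      have "(\<Prod>v\<in>S. exp (- (l * w v))) = exp (\<Sum>v\<in>S. - (l * w v))"
        using fS by (simp add: exp_sum)
      also have "\<dots> = exp (- (l * (\<Sum>u\<in>S. w u)))" by (simp add: sum_negf sum_distrib_left)
      finally show ?thesis by (simp add: right_diff_distrib exp_diff exp_minus divide_inverse)
    qed
    finally show "Wt n p S * of_bool ((\<Sum>u\<in>S. w u) < \<theta>) \<le> Wt n p S * (exp (l * \<theta>) * (\<Prod>v\<in>S. exp (- (l * w v))))"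
      using Wt_nonneg[OF p, of n S] by (simp add: mult_left_mono)
  qed
  also have "\<dots> = exp (l * \<theta>) * (\<Prod>v\<in>{0..<n}. p * exp (- (l * w v)) + (1 - p))"
    by (simp add: sum_distrib_left[symmetric] expect_prod mult.left_commute[of _ "exp (l * \<theta>)"])
  also have "\<dots> \<le> exp (l * \<theta>) * (\<Prod>v\<in>{0..<n}. exp (- (p * l * w v) + l^2))"
  proof (rule mult_left_mono[OF prod_mono])
    fix v assume v: "v \<in> {0..<n}"
    have wv: "0 \<le> w v" "w v \<le> 1" using w[OF v] by auto
    have x0: "0 \<le> l * w v" using l0 wv by simp
    have "(l * w v)^2 \<le> l^2" using wv l0
      by (simp add: power_mult_distrib mult_left_le power_le_one)
    have "exp (- (l * w v)) \<le> 1 - l * w v + (l * w v)^2" by (rule exp_neg_le[OF x0])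
    then have "p * exp (- (l * w v)) + (1 - p) \<le> p * (1 - l * w v + (l * w v)^2) + (1 - p)"
      using p by (simp add: mult_left_mono)
    also have "\<dots> \<le> 1 + (- (p * l * w v) + l^2)"
    proof -
      have "p * (l * w v)^2 \<le> (l * w v)^2" using p by (simp add: mult_left_le_one_le)
      then have "p * (l * w v)^2 \<le> l^2" using \<open>(l * w v)^2 \<le> l^2\<close> by linarith
      then show ?thesis by (simp add: algebra_simps)
    qed
    also have "\<dots> \<le> exp (- (p * l * w v) + l^2)" by (rule exp_ge_add_one_self)
    finally show "0 \<le> p * exp (- (l * w v)) + (1 - p) \<and>
         p * exp (- (l * w v)) + (1 - p) \<le> exp (- (p * l * w v) + l^2)"
      using p by simp
  qed simp
  also have "\<dots> = exp (l * \<theta> + (\<Sum>v\<in>{0..<n}. - (p * l * w v) + l^2))"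
    by (simp add: exp_sum exp_add)
  also have "l * \<theta> + (\<Sum>v\<in>{0..<n}. - (p * l * w v) + l^2) = - (l * e * n) + n * l^2"
  proof -
    have "(\<Sum>v\<in>{0..<n}. - (p * l * w v) + l^2) = - (p * l * (\<Sum>v\<in>{0..<n}. w v)) + n * l^2"
      by (simp add: sum.distrib sum_negf sum_distrib_left sum_subtractf)
    then show ?thesis unfolding \<theta>_def by (simp add: algebra_simps)
  qed
  also have "- (l * e * n) + n * l^2 = - (e^2 * n / 4)"
    unfolding l_def by (simp add: power2_eq_square field_simps)
  finally show ?thesis unfolding \<theta>_def .
qed

lemma lim_small:
  assumes "0 < a"
  shows "((\<lambda>n::nat. 2 * real n ^ 2 * exp (- (a * real n))) \<longlongrightarrow> 0) sequentially"
  using assms by real_asymp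



lemma card_filter_sum: "finite B \<Longrightarrow> real (card {b\<in>B. P b}) = (\<Sum>b\<in>B. of_bool (P b))"
  by (simp add: sum.If_cases Int_def)

lemma ebet_sum:
  assumes "finite A" "finite B"
  shows "real (e_between E A B) = (\<Sum>a\<in>A. \<Sum>b\<in>B. of_bool (E a b))"
proof -
  have "{(a, b). a \<in> A \<and> b \<in> B \<and> E a b} = Sigma A (\<lambda>a. {b\<in>B. E a b})" by auto
  then have "e_between E A B = (\<Sum>a\<in>A. card {b\<in>B. E a b})"
    unfolding e_between_def using assms by simp
  then show ?thesis using assms by (simp add: card_filter_sum)
qed

lemma swap4:
  "(\<Sum>x\<in>X. \<Sum>y\<in>Y. \<Sum>s\<in>P. \<Sum>t\<in>Q. f x y s t) = (\<Sum>s\<in>P. \<Sum>t\<in>Q. \<Sum>x\<in>X. \<Sum>y\<in>Y. f x y s t)"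
proof -
  have "(\<Sum>x\<in>X. \<Sum>y\<in>Y. \<Sum>s\<in>P. \<Sum>t\<in>Q. f x y s t) = (\<Sum>x\<in>X. \<Sum>s\<in>P. \<Sum>y\<in>Y. \<Sum>t\<in>Q. f x y s t)"
    by (rule sum.cong[OF refl], rule sum.swap)
  also have "\<dots> = (\<Sum>s\<in>P. \<Sum>x\<in>X. \<Sum>y\<in>Y. \<Sum>t\<in>Q. f x y s t)" by (rule sum.swap)
  also have "\<dots> = (\<Sum>s\<in>P. \<Sum>x\<in>X. \<Sum>t\<in>Q. \<Sum>y\<in>Y. f x y s t)"
    by (rule sum.cong[OF refl], rule sum.cong[OF refl], rule sum.swap)
  also have "\<dots> = (\<Sum>s\<in>P. \<Sum>t\<in>Q. \<Sum>x\<in>X. \<Sum>y\<in>Y. f x y s t)"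
    by (rule sum.cong[OF refl], rule sum.swap)
  finally show ?thesis .
qed



definition cc :: "(nat \<Rightarrow> nat \<Rightarrow> bool) \<Rightarrow> nat set \<Rightarrow> nat \<Rightarrow> nat \<Rightarrow> real" where
  "cc E V x t = (\<Sum>y\<in>V. of_bool (E x y \<and> E t y))"

lemma det:
  fixes V :: "nat set" and E and n :: nat and p q \<epsilon> :: real
  assumes finV: "finite V" and cardV: "card V = n" and n2: "2 \<le> n"
    and sg: "simple_graph V E" and cd: "cut_dense q V E"
    and p: "0 < p" "p \<le> 1" and q: "0 < q" "q \<le> 1" and eps: "\<epsilon> = p^4*q^3/1024"
    and SU: "S \<subseteq> U" "U \<subseteq> V" and AB: "A \<union> B = U" "A \<inter> B = {}"
    and G1: "\<forall>v\<in>V. \<forall>w\<in>V. p*(\<Sum>u\<in>V. of_bool(E v u \<and> E w u)) - \<epsilon>*n \<le> (\<Sum>u\<in>S. of_bool(E v u \<and> E w u))"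
    and G2: "\<forall>s\<in>V. \<forall>t\<in>V. p*(\<Sum>x\<in>V. of_bool(E s x) * cc E V x t / n) - \<epsilon>*n \<le> (\<Sum>x\<in>S. of_bool(E s x) * cc E V x t / n)"
  shows "p^4*q^3/1536 * card A * card B \<le> real (e_between E A B)"
proof -
  have AV: "A \<subseteq> V" and BV: "B \<subseteq> V" and SV: "S \<subseteq> V" using SU AB by auto
  have fA: "finite A" using finite_subset[OF AV finV] .
  have fB: "finite B" using finite_subset[OF BV finV] .
  have fS: "finite S" using finite_subset[OF SV finV] .
  have Esym: "\<And>u v. E u v = E v u" and Eirr: "\<And>v. \<not> E v v"
    using sg unfolding simple_graph_def by blast+
  have nreal: "real n \<ge> 2" using n2 by simp
  define eAB where "eAB = (\<Sum>a\<in>A. \<Sum>b\<in>B. (of_bool (E a b)::real))"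
  have eAB: "real (e_between E A B) = eAB" unfolding eAB_def using ebet_sum[OF fA fB] .
  have eBA: "eAB = (\<Sum>b\<in>B. \<Sum>a\<in>A. (of_bool (E b a)::real))"
    unfolding eAB_def by (subst sum.swap) (simp add: Esym)
  have eAB0: "0 \<le> eAB" unfolding eAB_def by (simp add: sum_nonneg)
  define D where "D = p*q*n/4"
  have D0: "0 \<le> D" using p q by (simp add: D_def)
  have pq1: "p*q \<le> 1" using p q by (simp add: mult_le_one)
  have eps0: "0 \<le> \<epsilon>" unfolding eps using p q by simp
  have epsle: "\<epsilon> \<le> p*q/4"
  proof -
    have "p^3*q^2 \<le> 1" using p q by (simp add: mult_le_one power_le_one)
    then have "p*q*(p^3*q^2) \<le> p*q" using p q by (simp add: mult_left_le_one_le)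
    moreover have "p^4*q^3 = p*q*(p^3*q^2)" by algebra
    moreover have "0 \<le> p*q" using p q by simp
    ultimately show ?thesis unfolding eps by linarith
  qed
  have deg: "q*(real n - 1) \<le> (\<Sum>u\<in>V. of_bool (E v u))" if v: "v \<in> V" for v
  proof -
    have "{v} \<union> (V - {v}) = V" "{v} \<inter> (V - {v}) = {}" using v by auto
    then have "q * real (card {v}) * real (card (V - {v})) \<le> real (e_between E {v} (V - {v}))"
      using cd unfolding cut_dense_def by blast
    also have "\<dots> = (\<Sum>b\<in>V - {v}. of_bool (E v b))" using ebet_sum[of "{v}" "V - {v}" E] finV by simp
    also have "\<dots> = (\<Sum>b\<in>V. of_bool (E v b))" by (rule sum.mono_neutral_left) (use finV Eirr in auto)
    finally show ?thesis using v finV cardV n2 by (simp add: of_nat_diff)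
  qed
  have dS: "D \<le> (\<Sum>u\<in>S. of_bool (E v u))" if v: "v \<in> V" for v
  proof -
    have "p*(\<Sum>u\<in>V. of_bool(E v u)) - \<epsilon>*n \<le> (\<Sum>u\<in>S. of_bool(E v u))"
      using bspec[OF bspec[OF G1 v] v] unfolding conj_absorb .
    moreover have "p*(q*(real n - 1)) \<le> p*(\<Sum>u\<in>V. of_bool(E v u))"
      using deg[OF v] p by (simp add: mult_left_mono)
    moreover have "p*q*(real n / 2) \<le> p*(q*(real n - 1))"
      using nreal p q by (simp add: mult_left_mono)
    moreover have "\<epsilon>*n \<le> p*q/4*n" using mult_right_mono[OF epsle, of "real n"] by simp
    ultimately show ?thesis unfolding D_def by (simp add: algebra_simps)
  qed
  define S1 where "S1 = A \<inter> S"
  define S2 where "S2 = B \<inter> S"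
  have S12: "S = S1 \<union> S2" "S1 \<inter> S2 = {}" using SU AB unfolding S1_def S2_def by auto
  have fS1: "finite S1" and fS2: "finite S2" using fS S12 by auto
  define a where "a v = (\<Sum>u\<in>S1. (of_bool (E v u)::real))" for v
  define b where "b v = (\<Sum>u\<in>S2. (of_bool (E v u)::real))" for v
  have ab: "a v + b v = (\<Sum>u\<in>S. of_bool (E v u))" for v
    unfolding a_def b_def S12(1) by (rule sym, rule sum.union_disjoint[OF fS1 fS2 S12(2)])
  define X where "X = {v\<in>V. b v \<le> a v}"
  define Y where "Y = V - X"
  have hX: "D/2 \<le> a v" if "v \<in> X" for v using that dS[of v] ab[of v] unfolding X_def by auto
  have hY: "D/2 \<le> b v" if "v \<in> Y" for v using that dS[of v] ab[of v] unfolding X_def Y_def by auto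
  have a0: "0 \<le> a v" for v unfolding a_def by (simp add: sum_nonneg)
  have b0: "0 \<le> b v" for v unfolding b_def by (simp add: sum_nonneg)
  have cA: "real (card A) \<le> n" and cB: "real (card B) \<le> n"
    using card_mono[OF finV AV] card_mono[OF finV BV] cardV by auto
  define \<kappa> where "\<kappa> = p^4*q^3/1536"
  have \<kappa>le: "\<kappa> \<le> p*q/16"
  proof -
    have "p^3*q^2 \<le> 1" using p q by (simp add: mult_le_one power_le_one)
    then have "p*q*(p^3*q^2) \<le> p*q" using p q by (simp add: mult_left_le_one_le)
    moreover have "p^4*q^3 = p*q*(p^3*q^2)" by algebra
    moreover have "0 \<le> p*q" using p q by simp
    ultimately show ?thesis unfolding \<kappa>_def by linarith
  qed
  have \<kappa>0: "0 \<le> \<kappa>" using p q by (simp add: \<kappa>_def)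
  have easy: "\<kappa> * card A * card B \<le> eAB" if h: "real (card A) * D / 4 \<le> eAB \<or> real (card B) * D / 4 \<le> eAB"
  proof -
    have "\<kappa> * card B \<le> p*q/16 * n" using \<kappa>le cB \<kappa>0 p q by (intro mult_mono) auto
    then have "real (card A) * (\<kappa> * card B) \<le> real (card A) * (p*q/16 * n)"
      by (rule mult_left_mono) simp
    then have 1: "\<kappa> * card A * card B \<le> card A * D / 4"
      unfolding D_def by (simp add: algebra_simps)
    have "\<kappa> * card A \<le> p*q/16 * n" using \<kappa>le cA \<kappa>0 p q by (intro mult_mono) auto
    then have "real (card B) * (\<kappa> * card A) \<le> real (card B) * (p*q/16 * n)"
      by (rule mult_left_mono) simp
    then have 2: "\<kappa> * card A * card B \<le> card B * D / 4"
      unfolding D_def by (simp add: algebra_simps)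
    show ?thesis using h 1 2 by linarith
  qed
  show ?thesis
  proof (cases "card A \<le> 2 * card (A \<inter> Y)")
    case True
    have "eAB \<ge> (\<Sum>x\<in>A \<inter> Y. \<Sum>y\<in>B. of_bool (E x y))"
      unfolding eAB_def using fA by (intro sum_mono2) (auto simp: sum_nonneg)
    moreover have "(\<Sum>x\<in>A \<inter> Y. \<Sum>y\<in>B. (of_bool (E x y)::real)) \<ge> (\<Sum>x\<in>A \<inter> Y. b x)"
      unfolding b_def S2_def using fB by (intro sum_mono sum_mono2) auto
    moreover have "(\<Sum>x\<in>A \<inter> Y. b x) \<ge> card (A \<inter> Y) * (D/2)"
      using hY by (intro sum_bounded_below) auto
    moreover have "real (card (A \<inter> Y)) * (D/2) \<ge> card A * D / 4"
    proof -
      have "real (card A) \<le> real (2 * card (A \<inter> Y))" using True by (simp only: of_nat_le_iff)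
      then have "real (card A) * (D/4) \<le> real (2 * card (A \<inter> Y)) * (D/4)"
        by (rule mult_right_mono) (use D0 in simp)
      then show ?thesis by (simp add: ac_simps)
    qed
    ultimately have "real (card A) * D / 4 \<le> eAB" by linarith
    then have "\<kappa> * card A * card B \<le> eAB" using easy by blast
    then show ?thesis using eAB unfolding \<kappa>_def by simp
  next
    case False1: False
    show ?thesis
    proof (cases "card B \<le> 2 * card (B \<inter> X)")
      case True
      have "eAB \<ge> (\<Sum>x\<in>B \<inter> X. \<Sum>y\<in>A. of_bool (E x y))"
        unfolding eBA using fB by (intro sum_mono2) (auto simp: sum_nonneg)
      moreover have "(\<Sum>x\<in>B \<inter> X. \<Sum>y\<in>A. (of_bool (E x y)::real)) \<ge> (\<Sum>x\<in>B \<inter> X. a x)"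
        unfolding a_def S1_def using fA by (intro sum_mono sum_mono2) auto
      moreover have "(\<Sum>x\<in>B \<inter> X. a x) \<ge> card (B \<inter> X) * (D/2)"
        using hX by (intro sum_bounded_below) auto
      moreover have "real (card (B \<inter> X)) * (D/2) \<ge> card B * D / 4"
      proof -
        have "real (card B) \<le> real (2 * card (B \<inter> X))" using True by (simp only: of_nat_le_iff)
        then have "real (card B) * (D/4) \<le> real (2 * card (B \<inter> X)) * (D/4)"
          by (rule mult_right_mono) (use D0 in simp)
        then show ?thesis by (simp add: ac_simps)
      qed
      ultimately have "real (card B) * D / 4 \<le> eAB" by linarith
      then have "\<kappa> * card A * card B \<le> eAB" using easy by blast
      then show ?thesis using eAB unfolding \<kappa>_def by simp
    next
      case False2: False
      have XV: "X \<subseteq> V" and XY: "X \<union> Y = V" "X \<inter> Y = {}" unfolding X_def Y_def by auto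
      have fX: "finite X" using finite_subset[OF XV finV] .
      have fY: "finite Y" unfolding Y_def using finV by simp
      have AY: "A \<inter> Y = A - X" and BX: "B \<inter> X = B - Y" using AV BV unfolding Y_def by auto
      have "card A = card (A \<inter> X) + card (A - X)" using card_Int_Diff[OF fA] .
      then have "card A \<le> 2 * card (A \<inter> X)" using False1 AY by simp
      moreover have "card (A \<inter> X) \<le> card X" using fX by (simp add: card_mono)
      ultimately have cAX: "card A \<le> 2 * card X" by simp
      have "card B = card (B \<inter> Y) + card (B - Y)" using card_Int_Diff[OF fB] .
      then have "card B \<le> 2 * card (B \<inter> Y)" using False2 BX by simp
      moreover have "card (B \<inter> Y) \<le> card Y" using fY by (simp add: card_mono)
      ultimately have cBY: "card B \<le> 2 * card Y" by simp
      have "card A * card B \<le> (2 * card X) * (2 * card Y)" using cAX cBY by (rule mult_le_mono)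
      then have "real (card A * card B) \<le> real ((2 * card X) * (2 * card Y))" by (simp only: of_nat_le_iff)
      then have "real (card A) * real (card B) \<le> 4 * (real (card X) * real (card Y))" by simp
      then have MM: "real (card A) * real (card B) / 4 \<le> real (card X) * real (card Y)" by simp
      define eXY where "eXY = (\<Sum>x\<in>X. \<Sum>y\<in>Y. (of_bool (E x y)::real))"
      have hXY: "q * real (card X) * real (card Y) \<le> eXY"
        using cd XY ebet_sum[OF fX fY, of E] unfolding cut_dense_def eXY_def by metis
      define L where "L = (\<Sum>x\<in>V. \<Sum>y\<in>V. of_bool (E x y) * a x * b y)"
      have L1: "eXY * ((D/2)*(D/2)) \<le> L"
      proof -
        have "eXY * ((D/2)*(D/2)) = (\<Sum>x\<in>X. \<Sum>y\<in>Y. of_bool (E x y) * ((D/2)*(D/2)))"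
          unfolding eXY_def by (simp add: sum_distrib_right del: sum_of_bool_eq sum_mult_of_bool_eq sum_of_bool_mult_eq)
        also have "\<dots> \<le> (\<Sum>x\<in>X. \<Sum>y\<in>Y. of_bool (E x y) * a x * b y)"
        proof (intro sum_mono)
          fix x y assume x: "x \<in> X" and y: "y \<in> Y"
          have "(D/2)*(D/2) \<le> a x * b y" using hX[OF x] hY[OF y] D0 by (intro mult_mono) auto
          then show "of_bool (E x y) * ((D/2)*(D/2)) \<le> of_bool (E x y) * a x * b y"
            by (simp add: mult.assoc mult_left_mono)
        qed
        also have "\<dots> \<le> (\<Sum>x\<in>X. \<Sum>y\<in>V. of_bool (E x y) * a x * b y)"
          using finV XY a0 b0 by (intro sum_mono sum_mono2) auto
        also have "\<dots> \<le> L"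
          unfolding L_def using finV XV a0 b0 by (intro sum_mono2) (auto intro!: sum_nonneg)
        finally show ?thesis .
      qed
      define T where "T s t = (\<Sum>x\<in>V. of_bool (E s x) * cc E V x t)" for s t
      define cS where "cS x t = (\<Sum>y\<in>S. (of_bool (E x y \<and> E t y)::real))" for x t
      define TS where "TS s t = (\<Sum>x\<in>S. of_bool (E s x) * cS x t)" for s t
      have L2: "L = (\<Sum>s\<in>S1. \<Sum>t\<in>S2. T s t)"
      proof -
        have "L = (\<Sum>x\<in>V. \<Sum>y\<in>V. \<Sum>t\<in>S2. \<Sum>s\<in>S1. of_bool (E x y) * of_bool (E x s) * of_bool (E y t))"
          unfolding L_def a_def b_def
          by (simp add: sum_distrib_left sum_distrib_right mult.assoc del: sum_of_bool_eq sum_mult_of_bool_eq sum_of_bool_mult_eq)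
        also have "\<dots> = (\<Sum>x\<in>V. \<Sum>y\<in>V. \<Sum>s\<in>S1. \<Sum>t\<in>S2. of_bool (E x y) * of_bool (E x s) * of_bool (E y t))"
          by (rule sum.cong[OF refl], rule sum.cong[OF refl], rule sum.swap)
        also have "\<dots> = (\<Sum>s\<in>S1. \<Sum>t\<in>S2. \<Sum>x\<in>V. \<Sum>y\<in>V. of_bool (E x y) * of_bool (E x s) * of_bool (E y t))"
          by (rule swap4)
        also have "\<dots> = (\<Sum>s\<in>S1. \<Sum>t\<in>S2. \<Sum>x\<in>V. \<Sum>y\<in>V. of_bool (E s x) * of_bool (E x y \<and> E t y))"
        proof (intro sum.cong refl)
          fix s t x y
          show "of_bool (E x y) * of_bool (E x s) * of_bool (E y t) = (of_bool (E s x) * of_bool (E x y \<and> E t y) :: real)"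
            using Esym[of x s] Esym[of y t] by auto
        qed
        also have "\<dots> = (\<Sum>s\<in>S1. \<Sum>t\<in>S2. T s t)"
          unfolding T_def cc_def by (simp add: sum_distrib_left del: sum_of_bool_eq sum_mult_of_bool_eq sum_of_bool_mult_eq)
        finally show ?thesis .
      qed
      have cS_le: "cS x t \<le> n" for x t
      proof -
        have "cS x t \<le> (\<Sum>y\<in>S. 1)" unfolding cS_def by (intro sum_mono) simp
        also have "\<dots> = card S" by simp
        also have "\<dots> \<le> n" using card_mono[OF finV SV] cardV by simp
        finally show ?thesis .
      qed
      have cS0: "0 \<le> cS x t" for x t unfolding cS_def by (simp add: sum_nonneg)
      have low: "p^2 * T s t - 2*\<epsilon>*n*n \<le> TS s t" if s: "s \<in> V" and t: "t \<in> V" for s t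
      proof -
        have cSlow: "p * cc E V x t - \<epsilon>*n \<le> cS x t" if x: "x \<in> V" for x
          using bspec[OF bspec[OF G1 x] t] unfolding cc_def cS_def .
        have "(\<Sum>x\<in>S. of_bool (E s x) * (p * cc E V x t - \<epsilon>*n)) \<le> TS s t"
          unfolding TS_def using SV cSlow by (intro sum_mono mult_left_mono) auto
        moreover have "(\<Sum>x\<in>S. of_bool (E s x) * (p * cc E V x t - \<epsilon>*n))
            = p * (\<Sum>x\<in>S. of_bool (E s x) * cc E V x t) - \<epsilon>*n * (\<Sum>x\<in>S. of_bool (E s x))"
          by (simp add: sum_subtractf sum_distrib_left algebra_simps del: sum_of_bool_eq sum_mult_of_bool_eq sum_of_bool_mult_eq)
        moreover have g: "p*((\<Sum>x\<in>V. of_bool(E s x) * cc E V x t)/n) - \<epsilon>*n \<le> (\<Sum>x\<in>S. of_bool(E s x) * cc E V x t)/n"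
          using bspec[OF bspec[OF G2 s] t] unfolding sum_divide_distrib[symmetric] .
        have n0: "0 < real n" using n2 by simp
        have g2: "p * T s t - \<epsilon>*n*n \<le> (\<Sum>x\<in>S. of_bool(E s x) * cc E V x t)"
        proof -
          have "real n * (p*((\<Sum>x\<in>V. of_bool(E s x) * cc E V x t)/n) - \<epsilon>*n) \<le> real n * ((\<Sum>x\<in>S. of_bool(E s x) * cc E V x t)/n)"
            using g n0 by (intro mult_left_mono) auto
          moreover have "real n * (p*((\<Sum>x\<in>V. of_bool(E s x) * cc E V x t)/n) - \<epsilon>*n) = p * T s t - \<epsilon>*n*n"
            unfolding T_def using n0 by (simp add: field_simps)
          moreover have "real n * ((\<Sum>x\<in>S. of_bool(E s x) * cc E V x t)/n) = (\<Sum>x\<in>S. of_bool(E s x) * cc E V x t)"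
            using n0 by simp
          ultimately show ?thesis by linarith
        qed
        have "p * (p * T s t - \<epsilon>*n*n) \<le> p * (\<Sum>x\<in>S. of_bool(E s x) * cc E V x t)"
          using g2 p by (intro mult_left_mono) auto
        moreover have "p * (p * T s t - \<epsilon>*n*n) = p^2 * T s t - p * (\<epsilon>*n*n)"
          by (simp add: algebra_simps power2_eq_square)
        moreover have "p * (\<epsilon>*n*n) \<le> \<epsilon>*n*n" using p eps0 by (simp add: mult_left_le_one_le)
        moreover have "(\<Sum>x\<in>S. (of_bool (E s x)::real)) \<le> n"
        proof -
          have "(\<Sum>x\<in>S. (of_bool (E s x)::real)) \<le> (\<Sum>x\<in>S. 1)" by (intro sum_mono) simp
          also have "\<dots> \<le> n" using card_mono[OF finV SV] cardV by simp
          finally show ?thesis .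
        qed
        then have "\<epsilon>*n * (\<Sum>x\<in>S. (of_bool (E s x)::real)) \<le> \<epsilon>*n*n" using eps0 by (intro mult_left_mono) auto
        ultimately show ?thesis by linarith
      qed
      define eB where "eB s = (\<Sum>x\<in>B. (of_bool (E s x)::real))" for s
      define eA where "eA t = (\<Sum>y\<in>A. (of_bool (E t y)::real))" for t
      have eB0: "0 \<le> eB s" for s unfolding eB_def by (simp add: sum_nonneg)
      have eA0: "0 \<le> eA t" for t unfolding eA_def by (simp add: sum_nonneg)
      have up: "TS s t \<le> n * eB s + eAB + n * eA t" for s t
      proof -
        have split: "TS s t = (\<Sum>x\<in>S1. of_bool (E s x) * cS x t) + (\<Sum>x\<in>S2. of_bool (E s x) * cS x t)"
          unfolding TS_def S12(1) by (rule sum.union_disjoint[OF fS1 fS2 S12(2)])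
        have pB: "(\<Sum>x\<in>S2. of_bool (E s x) * cS x t) \<le> n * eB s"
        proof -
          have "(\<Sum>x\<in>S2. of_bool (E s x) * cS x t) \<le> (\<Sum>x\<in>S2. of_bool (E s x) * real n)"
            using cS_le by (intro sum_mono mult_left_mono) auto
          also have "\<dots> \<le> (\<Sum>x\<in>B. of_bool (E s x) * real n)"
            using fB unfolding S2_def by (intro sum_mono2) auto
          also have "\<dots> = n * eB s" unfolding eB_def
            by (simp add: sum_distrib_left mult.commute del: sum_of_bool_eq sum_mult_of_bool_eq sum_of_bool_mult_eq)
          finally show ?thesis .
        qed
        have pA: "(\<Sum>x\<in>S1. of_bool (E s x) * cS x t) \<le> n * eA t + eAB"
        proof -
          have cx: "cS x t \<le> eA t + (\<Sum>y\<in>B. of_bool (E x y))" for x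
          proof -
            have "cS x t = (\<Sum>y\<in>S1. of_bool (E x y \<and> E t y)) + (\<Sum>y\<in>S2. of_bool (E x y \<and> E t y))"
              unfolding cS_def S12(1) by (rule sum.union_disjoint[OF fS1 fS2 S12(2)])
            moreover have "(\<Sum>y\<in>S1. (of_bool (E x y \<and> E t y)::real)) \<le> eA t"
            proof -
              have "(\<Sum>y\<in>S1. (of_bool (E x y \<and> E t y)::real)) \<le> (\<Sum>y\<in>S1. of_bool (E t y))"
                by (intro sum_mono) auto
              also have "\<dots> \<le> eA t" unfolding eA_def S1_def using fA by (intro sum_mono2) auto
              finally show ?thesis .
            qed
            moreover have "(\<Sum>y\<in>S2. (of_bool (E x y \<and> E t y)::real)) \<le> (\<Sum>y\<in>B. of_bool (E x y))"
            proof -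
              have "(\<Sum>y\<in>S2. (of_bool (E x y \<and> E t y)::real)) \<le> (\<Sum>y\<in>S2. of_bool (E x y))"
                by (intro sum_mono) auto
              also have "\<dots> \<le> (\<Sum>y\<in>B. of_bool (E x y))" unfolding S2_def using fB by (intro sum_mono2) auto
              finally show ?thesis .
            qed
            ultimately show ?thesis by linarith
          qed
          have "(\<Sum>x\<in>S1. of_bool (E s x) * cS x t) \<le> (\<Sum>x\<in>S1. cS x t)"
            using cS0 by (intro sum_mono) (simp add: mult_left_le_one_le)
          also have "\<dots> \<le> (\<Sum>x\<in>S1. eA t + (\<Sum>y\<in>B. of_bool (E x y)))"
            using cx by (intro sum_mono) auto
          also have "\<dots> = card S1 * eA t + (\<Sum>x\<in>S1. \<Sum>y\<in>B. of_bool (E x y))"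
            by (simp add: sum.distrib del: sum_of_bool_eq sum_mult_of_bool_eq sum_of_bool_mult_eq)
          also have "\<dots> \<le> n * eA t + eAB"
          proof -
            have "real (card S1) \<le> n" using card_mono[OF finV, of S1] SV S12 cardV by auto
            then have "card S1 * eA t \<le> n * eA t" using eA0 by (intro mult_right_mono) auto
            moreover have "(\<Sum>x\<in>S1. \<Sum>y\<in>B. (of_bool (E x y)::real)) \<le> eAB"
              unfolding eAB_def S1_def using fA by (intro sum_mono2) (auto intro!: sum_nonneg)
            ultimately show ?thesis by linarith
          qed
          finally show ?thesis .
        qed
        show ?thesis using split pA pB by linarith
      qed
      have SumTS: "(\<Sum>s\<in>S1. \<Sum>t\<in>S2. TS s t) \<le> 3*(real n*real n)*eAB"
      proof -
        have "(\<Sum>s\<in>S1. \<Sum>t\<in>S2. TS s t) \<le> (\<Sum>s\<in>S1. \<Sum>t\<in>S2. n * eB s + eAB + n * eA t)"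
          using up by (intro sum_mono) auto
        also have "\<dots> = real (card S2) * (\<Sum>s\<in>S1. n * eB s) + real (card S1) * real (card S2) * eAB
                          + real (card S1) * (\<Sum>t\<in>S2. n * eA t)"
          by (simp add: sum.distrib sum_distrib_left algebra_simps)
        also have "\<dots> \<le> 3*(real n*real n)*eAB"
        proof -
          have c1: "real (card S1) \<le> n" using card_mono[OF finV, of S1] SV S12 cardV by auto
          have c2: "real (card S2) \<le> n" using card_mono[OF finV, of S2] SV S12 cardV by auto
          have s1: "(\<Sum>s\<in>S1. n * eB s) \<le> n * eAB"
          proof -
            have "(\<Sum>s\<in>S1. eB s) \<le> (\<Sum>s\<in>A. eB s)" using fA eB0 unfolding S1_def by (intro sum_mono2) auto
            also have "\<dots> = eAB" unfolding eB_def eAB_def ..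
            finally show ?thesis by (simp add: sum_distrib_left[symmetric] mult_left_mono)
          qed
          have s2: "(\<Sum>t\<in>S2. n * eA t) \<le> n * eAB"
          proof -
            have "(\<Sum>t\<in>S2. eA t) \<le> (\<Sum>t\<in>B. eA t)" using fB eA0 unfolding S2_def by (intro sum_mono2) auto
            also have "\<dots> = eAB" unfolding eA_def eBA ..
            finally show ?thesis by (simp add: sum_distrib_left[symmetric] mult_left_mono)
          qed
          have "real (card S2) * (\<Sum>s\<in>S1. n * eB s) \<le> n * (n * eAB)"
            using c2 s1 eAB0 by (intro mult_mono) (auto intro!: sum_nonneg simp: eB0)
          moreover have "real (card S1) * (\<Sum>t\<in>S2. n * eA t) \<le> n * (n * eAB)"
            using c1 s2 eAB0 by (intro mult_mono) (auto intro!: sum_nonneg simp: eA0)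
          moreover have "real (card S1) * real (card S2) * eAB \<le> real n * real n * eAB"
          proof -
            have "real (card S1) * real (card S2) \<le> real n * real n"
              using c1 c2 by (intro mult_mono) auto
            then show ?thesis using eAB0 by (rule mult_right_mono)
          qed
          ultimately show ?thesis by (simp add: algebra_simps)
        qed
        finally show ?thesis .
      qed
      have pL: "p^2 * L \<le> (\<Sum>s\<in>S1. \<Sum>t\<in>S2. TS s t) + real (card S1) * real (card S2) * (2*\<epsilon>*n*n)"
      proof -
        have "p^2 * L = (\<Sum>s\<in>S1. \<Sum>t\<in>S2. p^2 * T s t)" unfolding L2 by (simp add: sum_distrib_left)
        also have "\<dots> \<le> (\<Sum>s\<in>S1. \<Sum>t\<in>S2. TS s t + 2*\<epsilon>*n*n)"
        proof (intro sum_mono)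
          fix s t assume "s \<in> S1" "t \<in> S2"
          then have "s \<in> V" "t \<in> V" using SV S12 by auto
          then show "p^2 * T s t \<le> TS s t + 2*\<epsilon>*n*n" using low by fastforce
        qed
        also have "\<dots> = (\<Sum>s\<in>S1. \<Sum>t\<in>S2. TS s t) + real (card S1) * real (card S2) * (2*\<epsilon>*n*n)"
          by (simp add: sum.distrib)
        finally show ?thesis .
      qed
      have c12: "real (card S1) * real (card S2) \<le> real (card A) * real (card B)"
        using card_mono[OF fA, of S1] card_mono[OF fB, of S2] unfolding S1_def S2_def
        by (intro mult_mono) auto
      have qAB: "q * (real (card A) * real (card B) / 4) \<le> eXY"
        using hXY MM q by (smt (verit) mult.assoc mult_left_mono)
      have DD: "0 \<le> (D/2)*(D/2)" using D0 by simp
      have "q * (real (card A) * real (card B) / 4) * ((D/2)*(D/2)) \<le> L"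
        using mult_right_mono[OF qAB DD] L1 by linarith
      then have "p^2 * (q * (real (card A) * real (card B) / 4) * ((D/2)*(D/2))) \<le> p^2 * L"
        by (intro mult_left_mono) auto
      moreover have "real (card S1) * real (card S2) * (2*\<epsilon>*n*n) \<le> real (card A) * real (card B) * (2*\<epsilon>*n*n)"
        using c12 eps0 by (intro mult_right_mono) auto
      ultimately have main: "p^2 * (q * (real (card A) * real (card B) / 4) * ((D/2)*(D/2)))
          \<le> 3*(real n*real n)*eAB + real (card A) * real (card B) * (2*\<epsilon>*n*n)"
        using pL SumTS by linarith
      define K where "K = p^4*q^3*(real (card A) * real (card B))*(real n*real n)"
      have e1: "p^2 * (q * (real (card A) * real (card B) / 4) * ((D/2)*(D/2))) = K/256"
        unfolding K_def D_def by (simp add: field_simps power_numeral_reduce)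
      have e2: "real (card A) * real (card B) * (2*\<epsilon>*n*n) = K/512"
        unfolding K_def eps by (simp add: field_simps)
      have "K/1536 \<le> (real n*real n)*eAB" using main e1 e2 by linarith
      moreover have "K/1536 = (p^4*q^3/1536 * card A * card B) * (real n*real n)"
        unfolding K_def by (simp add: field_simps)
      moreover have "0 < real n * real n" using n2 by simp
      ultimately have "p^4*q^3/1536 * card A * card B \<le> eAB"
        by (metis mult.commute mult_le_cancel_right_pos)
      then show ?thesis using eAB by simp

    qed
  qed
qed



lemma delta_le:
  fixes p q :: real
  assumes p: "0 < p" "p \<le> 1/64" and q: "0 < q" "q \<le> 1/64"
  shows "p powr (1 / q ^ 4) * q ^ 5 \<le> p^4*q^3/1536"
proof -
  have "q^3 \<le> 1" using q by (simp add: power_le_one)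
  then have "q^4 \<le> q" using q by (simp add: mult_left_le_one_le power_numeral_reduce)
  then have "q^4 \<le> 1/4" using q by linarith
  then have "4 \<le> 1 / q^4" using q by (simp add: field_simps)
  then have "p powr (1 / q^4) \<le> p powr 4" using p by (intro powr_mono') auto
  also have "p powr 4 = p^4" using p by (simp add: powr_numeral)
  finally have a: "p powr (1 / q^4) \<le> p^4" .
  have "q^2 \<le> 1/1536"
  proof -
    have "q^2 \<le> (1/64)^2" using q by (intro power_mono) auto
    moreover have "(1/64::real)^2 = 1/4096" by (simp add: power2_eq_square)
    ultimately show ?thesis by linarith
  qed
  then have "q^3 * q^2 \<le> q^3 * (1/1536)" using q by (intro mult_left_mono) auto
  then have b: "q^5 \<le> q^3/1536" by (simp add: power_add[symmetric])
  have "p powr (1 / q ^ 4) * q ^ 5 \<le> p^4 * (q^3/1536)"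
    using a b q by (intro mult_mono) auto
  then show ?thesis by simp
qed

lemma cc_le: "cc E {0..<n} x t \<le> real n"
proof -
  have "cc E {0..<n} x t \<le> (\<Sum>y\<in>{0..<n}. 1)" unfolding cc_def by (intro sum_mono) simp
  then show ?thesis by simp
qed

theorem lemma3p12:
  shows "\<exists>c>0. \<forall>p q. 0 < p \<and> p \<le> c \<and> 0 < q \<and> q \<le> c \<longrightarrow>
    (\<forall>\<epsilon>>0. \<exists>N. \<forall>n\<ge>N. \<forall>E. simple_graph {0..<n} E \<and> cut_dense q {0..<n} E \<longrightarrow>
       random_subset_prob n p
         (\<lambda>S. \<forall>U. S \<subseteq> U \<and> U \<subseteq> {0..<n} \<longrightarrow>
                  cut_dense (p powr (1 / q ^ 4) * q ^ 5) U E) \<ge> 1 - \<epsilon>)"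
proof (intro exI[of _ "1/64"] conjI allI impI)
  show "(0::real) < 1/64" by simp
  fix p q :: real and eps :: real
  assume pq: "0 < p \<and> p \<le> 1/64 \<and> 0 < q \<and> q \<le> 1/64" and eps: "0 < eps"
  have p: "0 < p" "p \<le> 1" and q: "0 < q" "q \<le> 1" using pq by auto
  define e where "e = p^4*q^3/1024"
  have e0: "0 < e" using p q by (simp add: e_def)
  have "((\<lambda>n::nat. 2 * real n ^ 2 * exp (- ((e^2/4) * real n))) \<longlongrightarrow> 0) sequentially"
    using e0 by (intro lim_small) simp
  then have "eventually (\<lambda>n. 2 * real n ^ 2 * exp (- ((e^2/4) * real n)) < eps) sequentially"
    using eps by (rule order_tendstoD(2))
  then obtain N0 where N0: "\<And>n. n \<ge> N0 \<Longrightarrow> 2 * real n ^ 2 * exp (- ((e^2/4) * real n)) < eps"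
    unfolding eventually_sequentially by blast
  show "\<exists>N. \<forall>n\<ge>N. \<forall>E. simple_graph {0..<n} E \<and> cut_dense q {0..<n} E \<longrightarrow>
       random_subset_prob n p
         (\<lambda>S. \<forall>U. S \<subseteq> U \<and> U \<subseteq> {0..<n} \<longrightarrow>
                  cut_dense (p powr (1 / q ^ 4) * q ^ 5) U E) \<ge> 1 - eps"
  proof (intro exI[of _ "max 2 N0"] allI impI)
    fix n E assume n: "max 2 N0 \<le> n" and G: "simple_graph {0..<n} E \<and> cut_dense q {0..<n} E"
    let ?V = "{0..<n}"
    have n2: "2 \<le> n" and nN: "N0 \<le> n" using n by auto
    have n0: "0 < real n" using n2 by simp
    define w1 where "w1 i u = (of_bool (E (fst i) u \<and> E (snd i) u) :: real)" for i u
    define w2 where "w2 i x = of_bool (E (fst i) x) * cc E ?V x (snd i) / n" for i x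
    define B1 where "B1 i S = ((\<Sum>u\<in>S. w1 i u) < p * (\<Sum>u\<in>?V. w1 i u) - e * n)" for i S
    define B2 where "B2 i S = ((\<Sum>u\<in>S. w2 i u) < p * (\<Sum>u\<in>?V. w2 i u) - e * n)" for i S
    define bnd where "bnd = exp (- (e^2 * real n / 4))"
    have pr1: "random_subset_prob n p (B1 i) \<le> bnd" for i
      unfolding B1_def bnd_def using p e0 by (intro rsp_tail) (auto simp: w1_def)
    have pr2: "random_subset_prob n p (B2 i) \<le> bnd" for i
      unfolding B2_def bnd_def using p e0
    proof (intro rsp_tail)
      fix v assume "v \<in> ?V"
      show "0 \<le> w2 i v \<and> w2 i v \<le> 1"
        unfolding w2_def using cc_le[of E n v "snd i"] n0
        by (auto simp: cc_def sum_nonneg divide_simps)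
    qed auto
    have cV: "card (?V \<times> ?V) = n^2" by (simp add: power2_eq_square)
    have u1: "random_subset_prob n p (\<lambda>S. \<exists>i\<in>?V \<times> ?V. B1 i S) \<le> n^2 * bnd"
    proof -
      have "random_subset_prob n p (\<lambda>S. \<exists>i\<in>?V \<times> ?V. B1 i S) \<le> (\<Sum>i\<in>?V \<times> ?V. random_subset_prob n p (B1 i))"
        using p by (intro rsp_union) auto
      also have "\<dots> \<le> (\<Sum>i\<in>?V \<times> ?V. bnd)" using pr1 by (intro sum_mono) auto
      finally show ?thesis using cV by simp
    qed
    have u2: "random_subset_prob n p (\<lambda>S. \<exists>i\<in>?V \<times> ?V. B2 i S) \<le> n^2 * bnd"
    proof -
      have "random_subset_prob n p (\<lambda>S. \<exists>i\<in>?V \<times> ?V. B2 i S) \<le> (\<Sum>i\<in>?V \<times> ?V. random_subset_prob n p (B2 i))"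
        using p by (intro rsp_union) auto
      also have "\<dots> \<le> (\<Sum>i\<in>?V \<times> ?V. bnd)" using pr2 by (intro sum_mono) auto
      finally show ?thesis using cV by simp
    qed
    define Good where "Good S = (\<not> (\<exists>i\<in>?V \<times> ?V. B1 i S) \<and> \<not> (\<exists>i\<in>?V \<times> ?V. B2 i S))" for S
    have "random_subset_prob n p (\<lambda>S. \<not> Good S) \<le> n^2 * bnd + n^2 * bnd"
    proof -
      have "random_subset_prob n p (\<lambda>S. \<not> Good S) = random_subset_prob n p (\<lambda>S. (\<exists>i\<in>?V \<times> ?V. B1 i S) \<or> (\<exists>i\<in>?V \<times> ?V. B2 i S))"
        unfolding Good_def by simp
      also have "\<dots> \<le> random_subset_prob n p (\<lambda>S. \<exists>i\<in>?V \<times> ?V. B1 i S) + random_subset_prob n p (\<lambda>S. \<exists>i\<in>?V \<times> ?V. B2 i S)"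
        using p by (intro rsp_or) auto
      finally show ?thesis using u1 u2 by linarith
    qed
    moreover have "n^2 * bnd + n^2 * bnd < eps"
      using N0[OF nN] unfolding bnd_def by (simp add: algebra_simps)
    ultimately have goodp: "1 - eps \<le> random_subset_prob n p Good"
      using rsp_compl[of n p Good] by linarith
    have "random_subset_prob n p Good \<le> random_subset_prob n p
         (\<lambda>S. \<forall>U. S \<subseteq> U \<and> U \<subseteq> {0..<n} \<longrightarrow> cut_dense (p powr (1 / q ^ 4) * q ^ 5) U E)"
    proof (rule rsp_mono)
      fix S assume SV: "S \<subseteq> ?V" and gS: "Good S"
      have G1: "\<forall>v\<in>?V. \<forall>w\<in>?V. p*(\<Sum>u\<in>?V. of_bool(E v u \<and> E w u)) - e*n \<le> (\<Sum>u\<in>S. of_bool(E v u \<and> E w u))"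
      proof (intro ballI)
        fix v w assume "v \<in> ?V" "w \<in> ?V"
        then have "\<not> B1 (v, w) S" using gS unfolding Good_def by blast
        then show "p*(\<Sum>u\<in>?V. of_bool(E v u \<and> E w u)) - e*n \<le> (\<Sum>u\<in>S. of_bool(E v u \<and> E w u))"
          unfolding B1_def w1_def by simp
      qed
      have G2: "\<forall>s\<in>?V. \<forall>t\<in>?V. p*(\<Sum>x\<in>?V. of_bool(E s x) * cc E ?V x t / n) - e*n \<le> (\<Sum>x\<in>S. of_bool(E s x) * cc E ?V x t / n)"
      proof (intro ballI)
        fix s t assume "s \<in> ?V" "t \<in> ?V"
        then have "\<not> B2 (s, t) S" using gS unfolding Good_def by blast
        then show "p*(\<Sum>x\<in>?V. of_bool(E s x) * cc E ?V x t / n) - e*n \<le> (\<Sum>x\<in>S. of_bool(E s x) * cc E ?V x t / n)"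
          unfolding B2_def w2_def by simp
      qed
      show "\<forall>U. S \<subseteq> U \<and> U \<subseteq> {0..<n} \<longrightarrow> cut_dense (p powr (1 / q ^ 4) * q ^ 5) U E"
      proof (intro allI impI)
        fix U assume SU: "S \<subseteq> U \<and> U \<subseteq> {0..<n}"
        show "cut_dense (p powr (1 / q ^ 4) * q ^ 5) U E"
          unfolding cut_dense_def
        proof (intro allI impI)
          fix A B assume AB: "A \<union> B = U \<and> A \<inter> B = {}"
          have d: "p^4*q^3/1536 * card A * card B \<le> real (e_between E A B)"
            using det[of ?V n E q p e S U A B] G G1 G2 SU AB n2 p q e_def by auto
          have "p powr (1 / q ^ 4) * q ^ 5 * card A * card B \<le> p^4*q^3/1536 * card A * card B"
            using delta_le[of p q] pq by (intro mult_right_mono) auto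
          then show "p powr (1 / q ^ 4) * q ^ 5 * real (card A) * real (card B) \<le> real (e_between E A B)"
            using d by linarith
        qed
      qed
    qed (use p in auto)
    then show "1 - eps \<le> random_subset_prob n p
         (\<lambda>S. \<forall>U. S \<subseteq> U \<and> U \<subseteq> {0..<n} \<longrightarrow> cut_dense (p powr (1 / q ^ 4) * q ^ 5) U E)"
      using goodp by linarith
  qed
qed


end
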